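(* Let $n\ge2$, let $W:\{0,1,\dots,n\}\to\mathbb{R}$ be nonnegative, nondecreasing and concave with $W(0)=0$, and let $\rho\ge1$. Define $F:\{1,\dots,n\}\to\mathbb{R}$ by $F(1)=W(1)$ and, for $j=1,\dots,n-1$, $$F(j+1)=\max_{\ell\in\{1,\dots,n\}}\frac{\min\{j,n-\ell\}F(j)-W(j)\rho+W(\ell)}{\min\{\ell,n-j\}}.$$ If $\hat j\in\{1,\dots,n-1\}$ is the smallest index with $F(\hat j+1)>F(\hat j)$, then $F(j+1)>F(j)$ for all $j=\hat j,\dots,n-1$. *)

theory Defs
  imports Main "HOL.Real"
begin

definition concave_on_grid :: "nat \<Rightarrow> (nat \<Rightarrow> real) \<Rightarrow> bool" where
  "concave_on_grid n W \<longleftrightarrow>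
     (\<forall>j. 1 \<le> j \<longrightarrow> j + 1 \<le> n \<longrightarrow> W (j + 1) - W j \<le> W j - W (j - 1))"

text \<open>The sequence F(1), ..., F(n); the value at 0 is an unused dummy.\<close>
fun Fseq :: "nat \<Rightarrow> (nat \<Rightarrow> real) \<Rightarrow> real \<Rightarrow> nat \<Rightarrow> real" where
  "Fseq n W \<rho> 0 = 0"
| "Fseq n W \<rho> (Suc 0) = W 1"
| "Fseq n W \<rho> (Suc (Suc i)) =
     Max ((\<lambda>l. (real (min (Suc i) (n - l)) * Fseq n W \<rho> (Suc i) - W (Suc i) * \<rho> + W l)
                / real (min l (n - Suc i))) ` {1..n})"

end

theory Submission
  imports Defs
begin

locale LL =
  fixes n :: nat and W :: "nat \<Rightarrow> real" and \<rho> :: real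
  assumes n2: "n \<ge> 2"
    and Wnn: "\<forall>j\<le>n. W j \<ge> 0"
    and Wmono: "\<forall>i j. i \<le> j \<longrightarrow> j \<le> n \<longrightarrow> W i \<le> W j"
    and conc: "concave_on_grid n W"
    and W0: "W 0 = 0"
    and rho: "\<rho> \<ge> 1"
begin

abbreviation F where "F \<equiv> Fseq n W \<rho>"

definition val :: "nat \<Rightarrow> nat \<Rightarrow> real" where
  "val j l = (real (min j (n - l)) * F j - W j * \<rho> + W l) / real (min l (n - j))"

lemma rec: "1 \<le> j \<Longrightarrow> F (j+1) = Max ((\<lambda>l. val j l) ` {1..n})"
  by (cases j) (auto simp: val_def)

lemma val_le: "1 \<le> j \<Longrightarrow> 1 \<le> l \<Longrightarrow> l \<le> n \<Longrightarrow> val j l \<le> F (j+1)"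
  unfolding rec by (rule Max_ge) auto

lemma attain: "1 \<le> j \<Longrightarrow> \<exists>l\<in>{1..n}. F (j+1) = val j l"
proof -
  assume "1 \<le> j"
  have "Max ((\<lambda>l. val j l) ` {1..n}) \<in> (\<lambda>l. val j l) ` {1..n}"
    by (rule Max_in) (use n2 in auto)
  then show ?thesis using rec[OF \<open>1 \<le> j\<close>] by auto
qed

lemma mk: "j < n \<Longrightarrow> l \<le> n \<Longrightarrow>
   real (min l (n - j)) - real (min j (n - l)) = real l - real j"
  by (cases "l + j \<le> n") auto

lemma dmono: "i \<le> i' \<Longrightarrow> i' + 1 \<le> n \<Longrightarrow> W(i'+1) - W i' \<le> W(i+1) - W i"
proof (induction i' rule: dec_induct)
  case base then show ?case by simp
next
  case (step k)
  have "W (Suc k + 1) - W (Suc k) \<le> W (Suc k) - W (Suc k - 1)"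
    using conc step.prems unfolding concave_on_grid_def by auto
  then show ?case using step by auto
qed

lemma c1: "j + d \<le> n \<Longrightarrow> W (j+d) - W j \<le> real d * (W(j+1) - W j)"
proof (induction d)
  case 0 then show ?case by simp
next
  case (Suc d)
  have "W (j+d+1) - W (j+d) \<le> W(j+1) - W j" using dmono[of j "j+d"] Suc.prems by auto
  then show ?case using Suc by (auto simp: algebra_simps)
qed

lemma c2: "l + d + 1 \<le> n \<Longrightarrow> W (l+d) - W l \<ge> real d * (W(l+d+1) - W(l+d))"
proof (induction d)
  case 0 then show ?case by simp
next
  case (Suc d)
  have IH: "W (l+d) - W l \<ge> real d * (W(l+d+1) - W(l+d))" using Suc by auto
  have m: "W(l+d+2) - W(l+d+1) \<le> W(l+d+1) - W(l+d)" using dmono[of "l+d" "l+d+1"] Suc.prems by auto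
  have "real d * (W(l+d+2) - W(l+d+1)) \<le> real d * (W(l+d+1) - W(l+d))"
    by (rule mult_left_mono[OF m]) auto
  then show ?case using IH m by (auto simp: algebra_simps)
qed

lemma P: "1 \<le> j \<Longrightarrow> j \<le> n \<Longrightarrow> \<forall>l. j < l \<longrightarrow> l \<le> n \<longrightarrow> W l - \<rho> * W j \<le> (real l - real j) * F j"
proof (induction j rule: dec_induct)
  case base
  show ?case
  proof (intro allI impI)
    fix l assume l: "1 < l" "l \<le> n"
    have "W (0 + l) - W 0 \<le> real l * (W (0+1) - W 0)" using c1[of 0 l] l by simp
    hence "W l \<le> real l * W 1" using W0 by simp
    moreover have "W 1 \<ge> 0" using Wnn l by auto
    moreover have "\<rho> * W 1 \<ge> W 1" using rho \<open>W 1 \<ge> 0\<close> by (simp add: mult_right_mono[of 1 \<rho>, simplified])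
    ultimately show "W l - \<rho> * W 1 \<le> (real l - real 1) * F 1" by (simp add: algebra_simps)
  qed
next
  case (step j)
  have IH: "\<forall>l. j < l \<longrightarrow> l \<le> n \<longrightarrow> W l - \<rho> * W j \<le> (real l - real j) * F j"
    using step by auto
  show ?case
  proof (intro allI impI)
    fix l assume l: "Suc j < l" "l \<le> n"
    define a where "a = F j"
    define b where "b = F (j+1)"
    define X where "X = W l - \<rho> * W j"
    define t where "t = real l - real j"
    define k where "k = real (min j (n - l))"
    define m where "m = real (min l (n - j))"
    have t2: "t \<ge> 2" using l by (auto simp: t_def)
    have mkt: "m = k + t" using mk[of j l] l by (auto simp: m_def k_def t_def)
    have k0: "k \<ge> 0" by (simp add: k_def)
    have m1: "m > 0" using l by (auto simp: m_def)
    have ha: "t * a \<ge> X" using IH l by (auto simp: X_def t_def a_def)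
    have "val j l \<le> b" using val_le[of j l] step l by (auto simp: b_def)
    hence "(k * a - W j * \<rho> + W l) / m \<le> b" by (simp add: val_def k_def m_def a_def)
    hence hb: "k * a + X \<le> m * b" using m1 by (simp add: divide_le_eq X_def algebra_simps)
    have "t * (m * b) \<ge> t * (k * a + X)" using hb t2 by (simp add: mult_left_mono)
    moreover have "k * (t * a) \<ge> k * X" using ha k0 by (simp add: mult_left_mono)
    ultimately have "t * (m * b) \<ge> m * X" using mkt by (simp add: algebra_simps)
    hence "m * (t * b) \<ge> m * X" by (simp add: algebra_simps)
    hence tb: "t * b \<ge> X" using m1 by simp
    define D where "D = W (j+1) - W j"
    have D0: "D \<ge> 0" using Wmono step l by (auto simp: D_def)
    have "W (j + (l-j)) - W j \<le> real (l-j) * D" using c1[of j "l-j"] l by (simp add: D_def)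
    hence "W l - W j \<le> t * D" using l by (simp add: t_def of_nat_diff)
    moreover have "\<rho> * W j \<ge> W j" using rho Wnn step by (simp add: mult_right_mono[of 1 \<rho>, simplified])
    moreover have "t * D \<le> t * (\<rho> * D)"
    proof -
      have "1 * D \<le> \<rho> * D" using D0 rho by (rule mult_right_mono[rotated])
      thus ?thesis using t2 by (simp add: mult_left_mono)
    qed
    ultimately have XD: "X \<le> t * (\<rho> * D)" by (simp add: X_def)
    have "(t - 1) * (t * b) \<ge> (t - 1) * X" using tb t2 by (simp add: mult_left_mono)
    hence "t * ((t - 1) * b) \<ge> (t - 1) * X" by (simp add: algebra_simps)
    hence "t * ((t - 1) * b) \<ge> t * (X - \<rho> * D)" using XD by (simp add: algebra_simps)
    hence "(t - 1) * b \<ge> X - \<rho> * D" using t2 by simp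
    thus "W l - \<rho> * W (Suc j) \<le> (real l - real (Suc j)) * F (Suc j)"
      by (simp add: X_def D_def t_def b_def algebra_simps)
  qed
qed

lemma Qstep:
  assumes l: "1 \<le> l" "l < j" and jn: "j + 1 \<le> n"
    and phi: "W l - \<rho> * W j > (real l - real j) * F j"
  shows "F (j+1) > F j \<and> W l - \<rho> * W (j+1) > (real l - real (j+1)) * F (j+1)"
proof -
  define a where "a = F j"
  define b where "b = F (j+1)"
  define k where "k = real (min j (n - l))"
  define m where "m = real (min l (n - j))"
  define p where "p = W l - \<rho> * W j - (real l - real j) * a"
  have p0: "p > 0" using phi by (simp add: p_def a_def)
  have mkt: "m = k + (real l - real j)" using mk[of j l] l jn by (auto simp: m_def k_def)
  have m1: "m > 0" using l jn by (auto simp: m_def)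
  have "val j l \<le> b" using val_le[of j l] l jn by (auto simp: b_def)
  hence "(k * a - W j * \<rho> + W l) / m \<le> b" by (simp add: val_def k_def m_def a_def)
  hence hb: "k * a - W j * \<rho> + W l \<le> m * b" using m1 by (simp add: divide_le_eq algebra_simps)
  hence "k * a - W j * \<rho> + W l \<le> (k + (real l - real j)) * b" using mkt by simp
  hence "(k + (real l - real j)) * a + p \<le> (k + (real l - real j)) * b"
    by (simp add: p_def algebra_simps)
  hence "m * a + p \<le> m * b" using mkt by simp
  hence "m * a < m * b" using p0 by simp
  hence ab: "a < b" using m1 by simp
  define D where "D = W (j+1) - W j"
  define d where "d = j - l"
  have jd: "j = l + d" using l by (simp add: d_def)
  have "W (l+d) - W l \<ge> real d * (W(l+d+1) - W(l+d))" using c2[of l d] jd jn by simp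
  hence c: "W j - W l \<ge> real d * D" using jd by (simp add: D_def)
  have Wl: "W l \<ge> 0" using Wnn l jn by auto
  have "\<rho> * W l \<ge> W l" using rho Wl by (simp add: mult_right_mono[of 1 \<rho>, simplified])
  hence "\<rho> * W j - W l \<ge> \<rho> * (W j - W l)" by (simp add: algebra_simps)
  moreover have "\<rho> * (W j - W l) \<ge> \<rho> * (real d * D)" using c rho by (simp add: mult_left_mono)
  moreover have "real d * a > \<rho> * W j - W l" using p0 jd by (simp add: p_def algebra_simps)
  ultimately have "real d * a > real d * (\<rho> * D)" by (simp add: algebra_simps)
  hence aD: "a > \<rho> * D" using jd l by (simp add: mult_less_cancel_left)
  have "real d * (b - a) \<ge> 0" using ab by simp
  hence "W l - \<rho> * W (j+1) - (real l - real (j+1)) * b = p + (b - \<rho> * D) + real d * (b - a)"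
    using jd by (simp add: p_def D_def algebra_simps)
  moreover have "p + (b - \<rho> * D) + real d * (b - a) > 0" using p0 aD ab \<open>real d * (b - a) \<ge> 0\<close> by linarith
  ultimately show ?thesis using ab by (simp add: a_def b_def)
qed

lemma chain:
  assumes l: "1 \<le> l" "l < j0" and phi: "W l - \<rho> * W j0 > (real l - real j0) * F j0"
  shows "j0 \<le> j \<Longrightarrow> j + 1 \<le> n \<Longrightarrow> F (j+1) > F j \<and> W l - \<rho> * W (j+1) > (real l - real (j+1)) * F (j+1)"
proof (induction j rule: dec_induct)
  case base then show ?case using Qstep[OF l _ phi] l by simp
next
  case (step j)
  then show ?case using Qstep[of l "Suc j"] l by simp
qed

lemma start:
  assumes j: "1 \<le> j" "j + 1 \<le> n" and gt: "F (j+1) > F j"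
  shows "\<exists>l. 1 \<le> l \<and> l < j \<and> W l - \<rho> * W j > (real l - real j) * F j"
proof -
  obtain l where l: "l \<in> {1..n}" and e: "F (j+1) = val j l" using attain[OF j(1)] by auto
  define a where "a = F j"
  define k where "k = real (min j (n - l))"
  define m where "m = real (min l (n - j))"
  have mkt: "m = k + (real l - real j)" using mk[of j l] l j by (auto simp: m_def k_def)
  have m1: "m > 0" using l j by (auto simp: m_def)
  have "(k * a - W j * \<rho> + W l) / m > a" using gt e by (simp add: val_def k_def m_def a_def)
  hence "k * a - W j * \<rho> + W l > m * a" using m1 by (simp add: less_divide_eq algebra_simps)
  hence phi: "W l - \<rho> * W j > (real l - real j) * a" using mkt by (simp add: algebra_simps)
  have "l < j"
  proof (rule ccontr)
    assume "\<not> l < j"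
    hence "j = l \<or> j < l" by auto
    thus False
    proof
      assume "j = l"
      moreover have "W j \<ge> 0" using Wnn j by auto
      moreover have "\<rho> * W j \<ge> W j" using rho \<open>W j \<ge> 0\<close> by (simp add: mult_right_mono[of 1 \<rho>, simplified])
      ultimately show False using phi by simp
    next
      assume "j < l"
      thus False using P[of j] j l phi by (force simp: a_def)
    qed
  qed
  thus ?thesis using l phi by (auto simp: a_def)
qed

end

theorem lemma3:
  fixes n :: nat and W :: "nat \<Rightarrow> real" and \<rho> :: real and jh :: nat
  assumes "n \<ge> 2"
    and "\<forall>j\<le>n. W j \<ge> 0"
    and "\<forall>i j. i \<le> j \<longrightarrow> j \<le> n \<longrightarrow> W i \<le> W j"
    and "concave_on_grid n W"
    and "W 0 = 0"
    and "\<rho> \<ge> 1"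
    and "jh \<in> {1..n-1}"
    and "Fseq n W \<rho> (jh + 1) > Fseq n W \<rho> jh"
    and "\<forall>j\<in>{1..<jh}. \<not> (Fseq n W \<rho> (j + 1) > Fseq n W \<rho> j)"
  shows "\<forall>j\<in>{jh..n-1}. Fseq n W \<rho> (j + 1) > Fseq n W \<rho> j"
proof -
  interpret LL n W \<rho> using assms by unfold_locales auto
  have j: "1 \<le> jh" "jh + 1 \<le> n" using assms by auto
  obtain l where l: "1 \<le> l" "l < jh" "W l - \<rho> * W jh > (real l - real jh) * Fseq n W \<rho> jh"
    using start[OF j assms(8)] by auto
  show ?thesis
  proof
    fix j assume "j \<in> {jh..n-1}"
    hence "jh \<le> j" "j + 1 \<le> n" using assms by auto
    thus "Fseq n W \<rho> (j + 1) > Fseq n W \<rho> j" using chain[OF l] by blast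
  qed
qed

end
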